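(* Let $W_2\in\{M_2,S_2\}$ and let $\phi:W_{2}\rightarrow W_{2}$ be a linear map that preserves the L-spectrum, i.e. $\sigma_{\mathcal{K}}(\phi(A))=\sigma_{\mathcal{K}}(A)$ for all $A\in W_2$. Then \[ \phi(E_{11})= \begin{bmatrix} 1-a & \mp\sqrt{a^{2}-a}\\ \pm\sqrt{a^{2}-a} & a \end{bmatrix},\quad \phi(E_{22})= \begin{bmatrix} a & \pm\sqrt{a^{2}-a}\\ \mp\sqrt{a^{2}-a} & 1-a \end{bmatrix} \] for some $a\leq 0$, and \[ \phi(E_{12}+E_{21})= \begin{bmatrix} m & r\\ -r\pm 2 & -m \end{bmatrix} \] for some $m,r\in\mathbb{R}$. In particular, if $W_{2}=S_{2}$, then $\phi(E_{11})=E_{11}$, $\phi(E_{22})=E_{22}$, and \[ \phi(E_{12}+E_{21})= \begin{bmatrix} m & r\\ r & -m \end{bmatrix} \] for some $m\in\mathbb{R}$ and $r\in\{-1,1\}$.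
   Context: $M_2$ is the space of $2\times 2$ real matrices and $S_2$ its subspace of symmetric matrices. The Lorentz cone in $\mathbb{R}^2$ is $\mathcal{K}=\{(x_1,x_2)\in\mathbb{R}^2: |x_1|\le x_2\}$. For $A\in M_2$, a scalar $\lambda\in\mathbb{R}$ is a Lorentz eigenvalue (L-eigenvalue) of $A$ if there is a nonzero $x\in\mathbb{R}^2$ with $x\in\mathcal{K}$, $(A-\lambda I)x\in\mathcal{K}$ and $x^T(A-\lambda I)x=0$; the set of all L-eigenvalues of $A$ is the L-spectrum $\sigma_{\mathcal{K}}(A)$. For $i,j\in\{1,2\}$, $E_{ij}$ denotes the $2\times 2$ matrix whose only nonzero entry is a $1$ in position $(i,j)$. The signs $\pm,\mp$ in $\phi(E_{11})$ and $\phi(E_{22})$ are chosen consistently (upper signs together or lower signs together). *)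

theory Defs
  imports "HOL-Analysis.Analysis"
begin

text \<open>2x2 real matrices are modelled as real^2^2; entries A $ i $ j with i,j :: 2 (values 1 and 2).\<close>

definition lorentz_cone :: "(real^2) set" where
  "lorentz_cone = {x. \<bar>x $ 1\<bar> \<le> x $ 2}"

definition L_eigenvalue :: "real^2^2 \<Rightarrow> real \<Rightarrow> bool" where
  "L_eigenvalue A l \<longleftrightarrow>
     (\<exists>x. x \<noteq> 0 \<and> x \<in> lorentz_cone \<and>
          (A - l *\<^sub>R mat 1) *v x \<in> lorentz_cone \<and>
          x \<bullet> ((A - l *\<^sub>R mat 1) *v x) = 0)"

definition L_spectrum :: "real^2^2 \<Rightarrow> real set" where
  "L_spectrum A = {l. L_eigenvalue A l}"

definition Eij :: "2 \<Rightarrow> 2 \<Rightarrow> real^2^2" where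
  "Eij i j = (\<chi> k l. if k = i \<and> l = j then 1 else 0)"

definition mat2 :: "real \<Rightarrow> real \<Rightarrow> real \<Rightarrow> real \<Rightarrow> real^2^2" where
  "mat2 a b c d = (\<chi> i j. if i = 1 then (if j = 1 then a else b) else (if j = 1 then c else d))"

definition sym2 :: "(real^2^2) set" where
  "sym2 = {A. transpose A = A}"

end

theory Submission
  imports Defs
begin


lemma comp_mv: "((A - l *\<^sub>R mat 1) *v (x::real^2)) $ 1 = (A$1$1 - l)*x$1 + A$1$2*x$2"
  "((A - l *\<^sub>R mat 1) *v (x::real^2)) $ 2 = A$2$1*x$1 + (A$2$2 - l)*x$2"
  by (simp_all add: matrix_vector_mult_def sum_2 mat_def algebra_simps)

lemma vec2_nz: "(x::real^2) \<noteq> 0 \<longleftrightarrow> x$1 \<noteq> 0 \<or> x$2 \<noteq> 0"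
  by (auto simp: vec_eq_iff forall_2)

lemma inner2: "(x::real^2) \<bullet> y = x$1*y$1 + x$2*y$2"
  by (simp add: inner_vec_def sum_2)

lemma Leig_scalar: "L_eigenvalue A l \<longleftrightarrow> (\<exists>x1 x2. (x1 \<noteq> 0 \<or> x2 \<noteq> 0) \<and> \<bar>x1\<bar> \<le> x2 \<and>
   \<bar>(A$1$1 - l)*x1 + A$1$2*x2\<bar> \<le> A$2$1*x1 + (A$2$2 - l)*x2 \<and>
   x1*((A$1$1 - l)*x1 + A$1$2*x2) + x2*(A$2$1*x1 + (A$2$2-l)*x2) = 0)" (is "_ \<longleftrightarrow> ?rhs")
proof
  assume "L_eigenvalue A l"
  then obtain x where "x \<noteq> 0" "x \<in> lorentz_cone" "(A - l *\<^sub>R mat 1) *v x \<in> lorentz_cone"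
     "x \<bullet> ((A - l *\<^sub>R mat 1) *v x) = 0" unfolding L_eigenvalue_def by blast
  then show ?rhs unfolding lorentz_cone_def
    by (intro exI[of _ "x$1"] exI[of _ "x$2"]) (simp add: comp_mv vec2_nz inner2)
next
  assume "\<exists>x1 x2. (x1 \<noteq> 0 \<or> x2 \<noteq> 0) \<and> \<bar>x1\<bar> \<le> x2 \<and>
   \<bar>(A$1$1 - l)*x1 + A$1$2*x2\<bar> \<le> A$2$1*x1 + (A$2$2 - l)*x2 \<and>
   x1*((A$1$1 - l)*x1 + A$1$2*x2) + x2*(A$2$1*x1 + (A$2$2-l)*x2) = 0"
  then obtain x1 x2 where h: "(x1 \<noteq> 0 \<or> x2 \<noteq> 0)" "\<bar>x1\<bar> \<le> x2"
   "\<bar>(A$1$1 - l)*x1 + A$1$2*x2\<bar> \<le> A$2$1*x1 + (A$2$2 - l)*x2"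
   "x1*((A$1$1 - l)*x1 + A$1$2*x2) + x2*(A$2$1*x1 + (A$2$2-l)*x2) = 0" by blast
  show "L_eigenvalue A l" unfolding L_eigenvalue_def lorentz_cone_def
    by (rule exI[of _ "vector [x1, x2]"]) (use h in \<open>simp add: comp_mv vec2_nz inner2\<close>)
qed



definition par :: "real \<Rightarrow> real \<Rightarrow> real \<Rightarrow> real \<Rightarrow> real \<Rightarrow> bool" where
  "par a b c d l \<longleftrightarrow> (\<exists>y1 y2. y1 \<ge> 0 \<and> y2 \<ge> 0 \<and> (y1 \<noteq> 0 \<or> y2 \<noteq> 0) \<and>
      (a-l)*y1 + b*y2 \<ge> 0 \<and> c*y1 + (d-l)*y2 \<ge> 0 \<and>
      y1*((a-l)*y1 + b*y2) + y2*(c*y1 + (d-l)*y2) = 0)"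

lemma parI1: "c \<ge> 0 \<Longrightarrow> par a b c d a"
  unfolding par_def by (rule exI[of _ 1], rule exI[of _ 0]) simp

lemma parI2: "b \<ge> 0 \<Longrightarrow> par a b c d d"
  unfolding par_def by (rule exI[of _ 0], rule exI[of _ 1]) simp

lemma parW: "y1 > 0 \<Longrightarrow> y2 > 0 \<Longrightarrow> (a-l)*y1 + b*y2 = 0 \<Longrightarrow> c*y1 + (d-l)*y2 = 0 \<Longrightarrow> par a b c d l"
  unfolding par_def by (rule exI[of _ y1], rule exI[of _ y2]) simp

lemma parE: assumes "par a b c d l"
  shows "(l = a \<and> c \<ge> 0) \<or> (l = d \<and> b \<ge> 0) \<or>
    (\<exists>y1 y2. y1 > 0 \<and> y2 > 0 \<and> (a-l)*y1 + b*y2 = 0 \<and> c*y1 + (d-l)*y2 = 0)"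
proof -
  obtain y1 y2 where h: "y1 \<ge> 0" "y2 \<ge> 0" "(y1 \<noteq> 0 \<or> y2 \<noteq> 0)"
      "(a-l)*y1 + b*y2 \<ge> 0" "c*y1 + (d-l)*y2 \<ge> 0"
      "y1*((a-l)*y1 + b*y2) + y2*(c*y1 + (d-l)*y2) = 0"
    using assms unfolding par_def by blast
  have p1: "y1*((a-l)*y1 + b*y2) \<ge> 0" using h by simp
  have p2: "y2*(c*y1 + (d-l)*y2) \<ge> 0" using h by simp
  have z1: "y1*((a-l)*y1 + b*y2) = 0" and z2: "y2*(c*y1 + (d-l)*y2) = 0" using p1 p2 h(6) by linarith+
  show ?thesis
  proof (cases "y1 = 0")
    case True
    then have "y2 > 0" using h by auto
    then have "(d-l)*y2 = 0" using z2 True by simp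
    then have "l = d" using \<open>y2 > 0\<close> by simp
    moreover have "b \<ge> 0" using h(4) True \<open>y2 > 0\<close> by (simp add: zero_le_mult_iff)
    ultimately show ?thesis by simp
  next
    case False
    then have y1p: "y1 > 0" using h by auto
    show ?thesis
    proof (cases "y2 = 0")
      case True
      then have "(a-l)*y1 = 0" using z1 y1p by simp
      then have "l = a" using y1p by simp
      moreover have "c \<ge> 0" using h(5) True y1p by (simp add: zero_le_mult_iff)
      ultimately show ?thesis by simp
    next
      case False
      then have "y2 > 0" using h by auto
      with y1p z1 z2 show ?thesis by auto
    qed
  qed
qed

lemma par_eig: assumes "par a b c d l" "l \<noteq> a" "l \<noteq> d" shows "(a-l)*(d-l) = b*c"
proof -
  obtain y1 y2 where h: "y1 > 0" "y2 > 0" "(a-l)*y1 + b*y2 = 0" "c*y1 + (d-l)*y2 = 0"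
    using parE[OF assms(1)] assms(2,3) by auto
  have "(a-l)*y1 = -(b*y2)" "(d-l)*y2 = -(c*y1)" using h by linarith+
  then have "((a-l)*y1)*((d-l)*y2) = (b*y2)*(c*y1)" by simp
  then have "((a-l)*(d-l))*(y1*y2) = (b*c)*(y1*y2)" by (simp add: algebra_simps)
  then show ?thesis using h by simp
qed

lemma par_two: assumes "par a b c d l1" "par a b c d l2" "l1 \<noteq> l2" "l1 \<noteq> a" "l1 \<noteq> d" "l2 \<noteq> a" "l2 \<noteq> d"
  shows "l1 + l2 = a + d"
proof -
  have "(a-l1)*(d-l1) = (a-l2)*(d-l2)" using par_eig assms by metis
  then have "(l1 - l2)*(l1 + l2 - a - d) = 0" by (simp add: algebra_simps)
  then show ?thesis using assms(3) by simp
qed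

lemma S0: "par x 0 0 y l \<Longrightarrow> l = x \<or> l = y"
  using parE[of x 0 0 y l] by auto

lemma SJ: "par 0 1 1 0 l \<Longrightarrow> l = 0 \<or> l = 1"
proof -
  assume a: "par 0 1 1 0 l"
  show ?thesis
  proof (rule ccontr)
    assume n: "\<not> (l = 0 \<or> l = 1)"
    then obtain y1 y2 where h: "y1 > 0" "y2 > 0" "(0-l)*y1 + 1*y2 = 0" "1*y1 + (0-l)*y2 = 0"
      using parE[OF a] by auto
    have "l*y1 = y2" using h by simp
    then have "l > 0" using h by (metis zero_less_mult_iff less_asym)
    have "l*l = 1" using par_eig[OF a] n by simp
    then have "(l-1)*(l+1) = 0" by (simp add: algebra_simps)
    then show False using \<open>l > 0\<close> n by auto
  qed
qed

lemma SJn: "par 0 (-1) (-1) 0 l \<Longrightarrow> l = -1"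
proof -
  assume a: "par 0 (-1) (-1) 0 l"
  have "\<exists>y1 y2. y1 > 0 \<and> y2 > 0 \<and> (0-l)*y1 + (-1)*y2 = 0 \<and> (-1)*y1 + (0-l)*y2 = 0"
      using parE[OF a] by auto
  then obtain y1 y2 where h: "y1 > 0" "y2 > 0" "(0-l)*y1 + (-1)*y2 = 0" "(-1)*y1 + (0-l)*y2 = 0"
      by blast
  have "l*y1 = -y2" using h by simp
  then have "l < 0" using h by (smt (verit) mult_nonneg_nonneg)
  have "l*l = 1" using par_eig[OF a] \<open>l < 0\<close> by simp
  then have "(l-1)*(l+1) = 0" by (simp add: algebra_simps)
  then show ?thesis using \<open>l < 0\<close> by auto
qed

lemma scal_par:
  fixes p q u v l :: real
  shows "(\<exists>x1 x2. (x1 \<noteq> 0 \<or> x2 \<noteq> 0) \<and> \<bar>x1\<bar> \<le> x2 \<and>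
   \<bar>(p - l)*x1 + q*x2\<bar> \<le> u*x1 + (v - l)*x2 \<and>
   x1*((p - l)*x1 + q*x2) + x2*(u*x1 + (v-l)*x2) = 0) \<longleftrightarrow>
   par ((p+q+u+v)/2) ((-p+q-u+v)/2) ((-p-q+u+v)/2) ((p-q-u+v)/2) l" (is "?L \<longleftrightarrow> ?R")
proof
  assume ?L
  then obtain x1 x2 where h: "(x1 \<noteq> 0 \<or> x2 \<noteq> 0)" "\<bar>x1\<bar> \<le> x2"
   "\<bar>(p - l)*x1 + q*x2\<bar> \<le> u*x1 + (v - l)*x2"
   "x1*((p - l)*x1 + q*x2) + x2*(u*x1 + (v-l)*x2) = 0" by blast
  have e1: "((p+q+u+v)/2 - l)*(x1+x2) + ((-p+q-u+v)/2)*(x2-x1) = ((p - l)*x1 + q*x2) + (u*x1 + (v - l)*x2)"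
    by (simp add: field_simps; simp add: algebra_simps)
  have e2: "((-p-q+u+v)/2)*(x1+x2) + ((p-q-u+v)/2 - l)*(x2-x1) = (u*x1 + (v - l)*x2) - ((p - l)*x1 + q*x2)"
    by (simp add: field_simps; simp add: algebra_simps)
  have e3: "(x1+x2)*(((p - l)*x1 + q*x2) + (u*x1 + (v - l)*x2)) + (x2-x1)*((u*x1 + (v - l)*x2) - ((p - l)*x1 + q*x2))
     = 2*(x1*((p - l)*x1 + q*x2) + x2*(u*x1 + (v-l)*x2))"
    by (simp add: field_simps; simp add: algebra_simps)
  show ?R unfolding par_def
    apply (rule exI[of _ "x1+x2"], rule exI[of _ "x2-x1"])
    unfolding e1 e2 e3 using h by auto
next
  assume ?R
  then obtain y1 y2 where h: "y1 \<ge> 0" "y2 \<ge> 0" "(y1 \<noteq> 0 \<or> y2 \<noteq> 0)"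
      "((p+q+u+v)/2-l)*y1 + ((-p+q-u+v)/2)*y2 \<ge> 0" "((-p-q+u+v)/2)*y1 + ((p-q-u+v)/2-l)*y2 \<ge> 0"
      "y1*(((p+q+u+v)/2-l)*y1 + ((-p+q-u+v)/2)*y2) + y2*(((-p-q+u+v)/2)*y1 + ((p-q-u+v)/2-l)*y2) = 0"
    unfolding par_def by blast
  define x1 where "x1 = (y1 - y2)/2"
  define x2 where "x2 = (y1 + y2)/2"
  have y1: "y1 = x1 + x2" and y2: "y2 = x2 - x1" unfolding x1_def x2_def by (simp_all add: field_simps)
  have e1: "((p+q+u+v)/2 - l)*(x1+x2) + ((-p+q-u+v)/2)*(x2-x1) = ((p - l)*x1 + q*x2) + (u*x1 + (v - l)*x2)"
    by (simp add: field_simps; simp add: algebra_simps)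
  have e2: "((-p-q+u+v)/2)*(x1+x2) + ((p-q-u+v)/2 - l)*(x2-x1) = (u*x1 + (v - l)*x2) - ((p - l)*x1 + q*x2)"
    by (simp add: field_simps; simp add: algebra_simps)
  have e3: "(x1+x2)*(((p - l)*x1 + q*x2) + (u*x1 + (v - l)*x2)) + (x2-x1)*((u*x1 + (v - l)*x2) - ((p - l)*x1 + q*x2))
     = 2*(x1*((p - l)*x1 + q*x2) + x2*(u*x1 + (v-l)*x2))"
    by (simp add: field_simps; simp add: algebra_simps)
  from h[unfolded y1 y2 e1 e2 e3] show ?L
    by (intro exI[of _ x1] exI[of _ x2]) auto
qed



lemma core:
  fixes K1 K2 K3 K4 L1 L2 L3 L4 M1 M2 M3 M4 :: real
  assumes H: "\<And>x y z l. par (x*K1+y*L1+z*M1) (x*K2+y*L2+z*M2) (x*K3+y*L3+z*M3) (x*K4+y*L4+z*M4) l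
                 \<longleftrightarrow> par x z z y l"
  shows "M1 = 0 \<and> M4 = 0 \<and> K2 + L2 = 0 \<and> K3 + L3 = 0 \<and> M2 > 0 \<and> M3 > 0 \<and> M2*M3 = 1 \<and>
    ((K1 = 1 \<and> K4 = 0 \<and> L1 = 0 \<and> L4 = 1) \<or> (K1 = 0 \<and> K4 = 1 \<and> L1 = 1 \<and> L4 = 0))"
proof -
  have D1: "par x z z y (x*K1+y*L1+z*M1) \<or> par (-x) (-z) (-z) (-y) (-(x*K1+y*L1+z*M1))" for x y z
  proof (cases "x*K3+y*L3+z*M3 \<ge> 0")
    case True
    then show ?thesis using H parI1 by blast
  next
    case False
    have "par ((-x)*K1+(-y)*L1+(-z)*M1) ((-x)*K2+(-y)*L2+(-z)*M2) ((-x)*K3+(-y)*L3+(-z)*M3) ((-x)*K4+(-y)*L4+(-z)*M4) ((-x)*K1+(-y)*L1+(-z)*M1)"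
      by (rule parI1) (use False in simp)
    then have "par (-x) (-z) (-z) (-y) ((-x)*K1+(-y)*L1+(-z)*M1)" using H by blast
    moreover have "(-x)*K1+(-y)*L1+(-z)*M1 = -(x*K1+y*L1+z*M1)" by simp
    ultimately show ?thesis by simp
  qed
  have D4: "par x z z y (x*K4+y*L4+z*M4) \<or> par (-x) (-z) (-z) (-y) (-(x*K4+y*L4+z*M4))" for x y z
  proof (cases "x*K2+y*L2+z*M2 \<ge> 0")
    case True
    then show ?thesis using H parI2 by blast
  next
    case False
    have "par ((-x)*K1+(-y)*L1+(-z)*M1) ((-x)*K2+(-y)*L2+(-z)*M2) ((-x)*K3+(-y)*L3+(-z)*M3) ((-x)*K4+(-y)*L4+(-z)*M4) ((-x)*K4+(-y)*L4+(-z)*M4)"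
      by (rule parI2) (use False in simp)
    then have "par (-x) (-z) (-z) (-y) ((-x)*K4+(-y)*L4+(-z)*M4)" using H by blast
    moreover have "(-x)*K4+(-y)*L4+(-z)*M4 = -(x*K4+y*L4+z*M4)" by simp
    ultimately show ?thesis by simp
  qed
  have k1: "K1 = 1 \<or> K1 = 0" using D1[where x=1 and y=0 and z=0] S0[of 1 0 K1] S0[of "-1" 0 "-K1"] by auto
  have l1: "L1 = 1 \<or> L1 = 0" using D1[where x=0 and y=1 and z=0] S0[of 0 1 L1] S0[of 0 "-1" "-L1"] by auto
  have kl1: "K1 + L1 = 1" using D1[where x=1 and y=1 and z=0] S0[of 1 1 "K1+L1"] S0[of "-1" "-1" "-(K1+L1)"] by auto
  have k4: "K4 = 1 \<or> K4 = 0" using D4[where x=1 and y=0 and z=0] S0[of 1 0 K4] S0[of "-1" 0 "-K4"] by auto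
  have l4: "L4 = 1 \<or> L4 = 0" using D4[where x=0 and y=1 and z=0] S0[of 0 1 L4] S0[of 0 "-1" "-L4"] by auto
  have kl4: "K4 + L4 = 1" using D4[where x=1 and y=1 and z=0] S0[of 1 1 "K4+L4"] S0[of "-1" "-1" "-(K4+L4)"] by auto
  have notK: False if "K1 = 0" "K4 = 0"
  proof -
    have "par 1 0 0 0 1" by (rule parI1) simp
    then have "par 0 K2 K3 0 1" using H[of 1 0 0 1] that by simp
    from parE[OF this] have "\<exists>y1 y2. y1 > 0 \<and> y2 > 0 \<and> (0-1)*y1 + K2*y2 = 0 \<and> K3*y1 + (0-1)*y2 = 0"
      by auto
    then obtain y1 y2 where h: "y1 > 0" "y2 > 0" "K2*y2 = y1" "K3*y1 = y2" by auto
    have "K2 > 0" using h by (metis zero_less_mult_iff less_asym)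
    have "K3 > 0" using h by (metis zero_less_mult_iff less_asym)
    have "par (-1) 0 0 0 0" by (rule parI2) simp
    then have "par 0 (-K2) (-K3) 0 0" using H[of "-1" 0 0 0] that by simp
    from parE[OF this] have "\<exists>y1 y2. y1 > 0 \<and> y2 > 0 \<and> (0-0)*y1 + (-K2)*y2 = 0"
      using \<open>K2 > 0\<close> \<open>K3 > 0\<close> by auto
    then show False using \<open>K2 > 0\<close> by auto
  qed
  have notL: False if "L1 = 0" "L4 = 0"
  proof -
    have "par 0 0 0 1 1" by (rule parI2) simp
    then have "par 0 L2 L3 0 1" using H[of 0 1 0 1] that by simp
    from parE[OF this] have "\<exists>y1 y2. y1 > 0 \<and> y2 > 0 \<and> (0-1)*y1 + L2*y2 = 0 \<and> L3*y1 + (0-1)*y2 = 0"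
      by auto
    then obtain y1 y2 where h: "y1 > 0" "y2 > 0" "L2*y2 = y1" "L3*y1 = y2" by auto
    have "L2 > 0" using h by (metis zero_less_mult_iff less_asym)
    have "L3 > 0" using h by (metis zero_less_mult_iff less_asym)
    have "par 0 0 0 (-1) 0" by (rule parI1) simp
    then have "par 0 (-L2) (-L3) 0 0" using H[of 0 "-1" 0 0] that by simp
    from parE[OF this] have "\<exists>y1 y2. y1 > 0 \<and> y2 > 0 \<and> (0-0)*y1 + (-L2)*y2 = 0"
      using \<open>L2 > 0\<close> \<open>L3 > 0\<close> by auto
    then show False using \<open>L2 > 0\<close> by auto
  qed
  have cases: "(K1 = 1 \<and> K4 = 0 \<and> L1 = 0 \<and> L4 = 1) \<or> (K1 = 0 \<and> K4 = 1 \<and> L1 = 1 \<and> L4 = 0)"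
    using k1 k4 kl1 kl4 notK notL by auto
  have m1: "M1 = 0 \<or> M1 = 1"
    using D1[where x=0 and y=0 and z=1] SJ[of M1] SJn[of "-M1"] by auto
  have m4: "M4 = 0 \<or> M4 = 1"
    using D4[where x=0 and y=0 and z=1] SJ[of M4] SJn[of "-M4"] by auto
  have not11: False if "M1 = 1" "M4 = 1"
  proof -
    have "par 0 1 1 0 0" by (rule parI1) simp
    then have a: "par 1 M2 M3 1 0" using H[of 0 0 1 0] that by simp
    from parE[OF this] have "\<exists>y1 y2. y1 > 0 \<and> y2 > 0 \<and> (1-0)*y1 + M2*y2 = 0"
      by auto
    then obtain y1 y2 where h: "y1 > 0" "y2 > 0" "M2*y2 = -y1" by auto
    have "M2*y2 < 0" using h by simp
    then have "M2 < 0" using h(2) by (simp add: mult_less_0_iff)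
    have e: "M2*M3 = 1" using par_eig[OF a] by simp
    have "par (-1) (-M2) (-M3) (-1) 0"
      by (rule parW[of "-M2" 1]) (use \<open>M2 < 0\<close> e in \<open>simp_all add: algebra_simps\<close>)
    then have "par 0 (-1) (-1) 0 0" using H[of 0 0 "-1" 0] that by simp
    then show False using SJn[of 0] by simp
  qed
  have t1: "par 0 2 2 3 0" by (rule parI1) simp
  have t2: "par 0 2 2 3 4" by (rule parW[of 1 2]) simp_all
  have t3: "par 3 2 2 0 0" by (rule parI2) simp
  have t4: "par 3 2 2 0 4" by (rule parW[of 2 1]) simp_all
  have not10: False if "M1 = 1" "M4 = 0"
    using cases
  proof
    assume c: "K1 = 1 \<and> K4 = 0 \<and> L1 = 0 \<and> L4 = 1"
    have "par 2 (3*L2+2*M2) (3*L3+2*M3) 3 0" "par 2 (3*L2+2*M2) (3*L3+2*M3) 3 4"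
      using H[of 0 3 2] t1 t2 c that by simp_all
    from par_two[OF this] show False by simp
  next
    assume c: "K1 = 0 \<and> K4 = 1 \<and> L1 = 1 \<and> L4 = 0"
    have "par 2 (3*K2+2*M2) (3*K3+2*M3) 3 0" "par 2 (3*K2+2*M2) (3*K3+2*M3) 3 4"
      using H[of 3 0 2] t3 t4 c that by simp_all
    from par_two[OF this] show False by simp
  qed
  have not01: False if "M1 = 0" "M4 = 1"
    using cases
  proof
    assume c: "K1 = 1 \<and> K4 = 0 \<and> L1 = 0 \<and> L4 = 1"
    have "par 3 (3*K2+2*M2) (3*K3+2*M3) 2 0" "par 3 (3*K2+2*M2) (3*K3+2*M3) 2 4"
      using H[of 3 0 2] t3 t4 c that by simp_all
    from par_two[OF this] show False by simp
  next
    assume c: "K1 = 0 \<and> K4 = 1 \<and> L1 = 1 \<and> L4 = 0"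
    have "par 3 (3*L2+2*M2) (3*L3+2*M3) 2 0" "par 3 (3*L2+2*M2) (3*L3+2*M3) 2 4"
      using H[of 0 3 2] t1 t2 c that by simp_all
    from par_two[OF this] show False by simp
  qed
  have M14: "M1 = 0" "M4 = 0" using m1 m4 not11 not10 not01 by auto
  have neg: "t*(K2+L2) + s*M2 < 0 \<and> t*(K3+L3) + s*M3 < 0" if "s < 0" for t s
  proof -
    have "\<not> par t s s t t"
    proof
      assume "par t s s t t"
      from parE[OF this] have "\<exists>y1 y2. y1 > 0 \<and> y2 > 0 \<and> (t-t)*y1 + s*y2 = 0"
        using that by auto
      then show False using that by auto
    qed
    then have n: "\<not> par t (t*(K2+L2) + s*M2) (t*(K3+L3) + s*M3) t t"
    proof -
      have f1: "t*K1+t*L1+s*M1 = t*(K1+L1)+s*M1" "t*K4+t*L4+s*M4 = t*(K4+L4)+s*M4"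
        by (simp_all only: distrib_left)
      have e: "t*K1+t*L1+s*M1 = t" "t*K4+t*L4+s*M4 = t" "t*K2+t*L2+s*M2 = t*(K2+L2)+s*M2"
        "t*K3+t*L3+s*M3 = t*(K3+L3)+s*M3"
        using M14 kl1 kl4 f1 by (simp_all only: distrib_left mult_1_right mult_zero_right add_0_right)
      show ?thesis using H[of t t s t] \<open>\<not> par t s s t t\<close> unfolding e by simp
    qed
    show ?thesis
    proof (rule conjI; rule ccontr)
      assume "\<not> t*(K2+L2) + s*M2 < 0"
      then show False using n parI2[of "t*(K2+L2) + s*M2" t "t*(K3+L3) + s*M3" t] by simp
    next
      assume "\<not> t*(K3+L3) + s*M3 < 0"
      then show False using n parI1[of "t*(K3+L3) + s*M3" t "t*(K2+L2) + s*M2" t] by simp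
    qed
  qed
  have M2p: "M2 > 0" using neg[where s="-1" and t=0] by simp
  have M3p: "M3 > 0" using neg[where s="-1" and t=0] by simp
  have N2: "K2 + L2 = 0"
  proof (rule ccontr)
    assume "K2 + L2 \<noteq> 0"
    then show False using neg[where s="-1" and t="M2/(K2+L2)"] by simp
  qed
  have N3: "K3 + L3 = 0"
  proof (rule ccontr)
    assume "K3 + L3 \<noteq> 0"
    then show False using neg[where s="-1" and t="M3/(K3+L3)"] by simp
  qed
  have "par 0 1 1 0 1" by (rule parW[of 1 1]) simp_all
  then have "par 0 M2 M3 0 1" using H[of 0 0 1 1] M14 by simp
  from par_eig[OF this] have "M2*M3 = 1" by simp
  then show ?thesis using M14 N2 N3 M2p M3p cases by simp
qed



definition oa :: "real^2^2 \<Rightarrow> real" where "oa A = (A$1$1 + A$1$2 + A$2$1 + A$2$2)/2"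
definition ob :: "real^2^2 \<Rightarrow> real" where "ob A = (-A$1$1 + A$1$2 - A$2$1 + A$2$2)/2"
definition oc :: "real^2^2 \<Rightarrow> real" where "oc A = (-A$1$1 - A$1$2 + A$2$1 + A$2$2)/2"
definition od :: "real^2^2 \<Rightarrow> real" where "od A = (A$1$1 - A$1$2 - A$2$1 + A$2$2)/2"

lemma mat2_nth [simp]: "mat2 a b c d $ 1 $ 1 = a" "mat2 a b c d $ 1 $ 2 = b"
  "mat2 a b c d $ 2 $ 1 = c" "mat2 a b c d $ 2 $ 2 = d"
  by (simp_all add: mat2_def)

lemma mat2_eq: "(A::real^2^2) = B \<longleftrightarrow> A$1$1 = B$1$1 \<and> A$1$2 = B$1$2 \<and> A$2$1 = B$2$1 \<and> A$2$2 = B$2$2"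
  by (auto simp: vec_eq_iff forall_2)

lemma recon: "A = mat2 ((oa A - ob A - oc A + od A)/2) ((oa A + ob A - oc A - od A)/2)
     ((oa A - ob A + oc A - od A)/2) ((oa A + ob A + oc A + od A)/2)"
  by (simp add: mat2_eq oa_def ob_def oc_def od_def field_simps)

lemma o_lin: 
  "oa (x *\<^sub>R A + y *\<^sub>R B + z *\<^sub>R C) = x * oa A + y * oa B + z * oa C"
  "ob (x *\<^sub>R A + y *\<^sub>R B + z *\<^sub>R C) = x * ob A + y * ob B + z * ob C"
  "oc (x *\<^sub>R A + y *\<^sub>R B + z *\<^sub>R C) = x * oc A + y * oc B + z * oc C"
  "od (x *\<^sub>R A + y *\<^sub>R B + z *\<^sub>R C) = x * od A + y * od B + z * od C"
  by (simp_all add: oa_def ob_def oc_def od_def field_simps)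

lemma o_mat2:
  "oa (mat2 p q u v) = (p+q+u+v)/2" "ob (mat2 p q u v) = (-p+q-u+v)/2"
  "oc (mat2 p q u v) = (-p-q+u+v)/2" "od (mat2 p q u v) = (p-q-u+v)/2"
  by (simp_all add: oa_def ob_def oc_def od_def)

lemma mat2_comb: "x *\<^sub>R mat2 a b c d + y *\<^sub>R mat2 a' b' c' d' + z *\<^sub>R mat2 a'' b'' c'' d''
   = mat2 (x*a+y*a'+z*a'') (x*b+y*b'+z*b'') (x*c+y*c'+z*c'') (x*d+y*d'+z*d'')"
  by (simp add: mat2_eq)

lemma mat2_transpose: "transpose (mat2 a b c d) = mat2 a c b d"
  by (simp add: mat2_eq transpose_def)

lemma Eij_mat2: "Eij 1 1 = mat2 1 0 0 0" "Eij 2 2 = mat2 0 0 0 1" "Eij 1 2 + Eij 2 1 = mat2 0 1 1 0"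
  by (simp_all add: mat2_eq Eij_def)


lemma Leig_par: "L_eigenvalue A l \<longleftrightarrow> par (oa A) (ob A) (oc A) (od A) l"
  unfolding Leig_scalar scal_par oa_def ob_def oc_def od_def by simp

theorem lemma4p3:
  fixes W :: "(real^2^2) set" and \<phi> :: "real^2^2 \<Rightarrow> real^2^2"
  assumes W: "W = UNIV \<or> W = sym2"
    and maps: "\<forall>A\<in>W. \<phi> A \<in> W"
    and lin: "\<forall>A\<in>W. \<forall>B\<in>W. \<forall>c d. \<phi> (c *\<^sub>R A + d *\<^sub>R B) = c *\<^sub>R \<phi> A + d *\<^sub>R \<phi> B"
    and pres: "\<forall>A\<in>W. L_spectrum (\<phi> A) = L_spectrum A"
  shows "(\<exists>a\<le>0. \<exists>s\<in>{-1, 1::real}.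
            \<phi> (Eij 1 1) = mat2 (1 - a) (- s * sqrt (a\<^sup>2 - a)) (s * sqrt (a\<^sup>2 - a)) a \<and>
            \<phi> (Eij 2 2) = mat2 a (s * sqrt (a\<^sup>2 - a)) (- s * sqrt (a\<^sup>2 - a)) (1 - a))
       \<and> (\<exists>m r. \<exists>t\<in>{-1, 1::real}. \<phi> (Eij 1 2 + Eij 2 1) = mat2 m r (- r + 2 * t) (- m))
       \<and> (W = sym2 \<longrightarrow>
            \<phi> (Eij 1 1) = Eij 1 1 \<and> \<phi> (Eij 2 2) = Eij 2 2 \<and>
            (\<exists>m. \<exists>r\<in>{-1, 1::real}. \<phi> (Eij 1 2 + Eij 2 1) = mat2 m r r (- m)))"
proof -
  define X1 where "X1 = mat2 (1/2) (1/2) (1/2) (1/2)"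
  define X2 where "X2 = mat2 (1/2) (-1/2) (-1/2) (1/2)"
  define Jo where "Jo = mat2 (-1) 0 0 1"
  define K where "K = \<phi> X1"
  define L where "L = \<phi> X2"
  define M where "M = \<phi> Jo"
  have symW: "A \<in> W" if "transpose A = A" for A using W that by (auto simp: sym2_def)
  have TT: "x *\<^sub>R X1 + y *\<^sub>R X2 + z *\<^sub>R Jo = mat2 ((x+y)/2 - z) ((x-y)/2) ((x-y)/2) ((x+y)/2+z)" for x y z
    unfolding X1_def X2_def Jo_def mat2_comb by (simp add: mat2_eq field_simps)
  have TW: "x *\<^sub>R X1 + y *\<^sub>R X2 + z *\<^sub>R Jo \<in> W" for x y z
    by (rule symW) (simp add: TT mat2_transpose)
  have X1W: "X1 \<in> W" using TW[of 1 0 0] by simp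
  have X2W: "X2 \<in> W" using TW[of 0 1 0] by simp
  have JoW: "Jo \<in> W" using TW[of 0 0 1] by simp
  have phiT: "\<phi> (x *\<^sub>R X1 + y *\<^sub>R X2 + z *\<^sub>R Jo) = x *\<^sub>R K + y *\<^sub>R L + z *\<^sub>R M" for x y z
  proof -
    have XW: "x *\<^sub>R X1 + y *\<^sub>R X2 \<in> W" using TW[of x y 0] by simp
    have "\<phi> (x *\<^sub>R X1 + y *\<^sub>R X2 + z *\<^sub>R Jo) = \<phi> (1 *\<^sub>R (x *\<^sub>R X1 + y *\<^sub>R X2) + z *\<^sub>R Jo)" by simp
    also have "\<dots> = 1 *\<^sub>R \<phi> (x *\<^sub>R X1 + y *\<^sub>R X2) + z *\<^sub>R \<phi> Jo" using lin XW JoW by blast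
    also have "\<phi> (x *\<^sub>R X1 + y *\<^sub>R X2) = x *\<^sub>R K + y *\<^sub>R L" using lin X1W X2W unfolding K_def L_def by blast
    finally show ?thesis by (simp add: M_def)
  qed
  have oT: "oa (x *\<^sub>R X1 + y *\<^sub>R X2 + z *\<^sub>R Jo) = x" "ob (x *\<^sub>R X1 + y *\<^sub>R X2 + z *\<^sub>R Jo) = z"
    "oc (x *\<^sub>R X1 + y *\<^sub>R X2 + z *\<^sub>R Jo) = z" "od (x *\<^sub>R X1 + y *\<^sub>R X2 + z *\<^sub>R Jo) = y" for x y z
    unfolding TT o_mat2 by (simp_all add: field_simps)
  have H: "par (x* oa K+y* oa L+z* oa M) (x* ob K+y* ob L+z* ob M) (x* oc K+y* oc L+z* oc M) (x* od K+y* od L+z* od M) l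
                 \<longleftrightarrow> par x z z y l" for x y z l
  proof -
    have "L_spectrum (\<phi> (x *\<^sub>R X1 + y *\<^sub>R X2 + z *\<^sub>R Jo)) = L_spectrum (x *\<^sub>R X1 + y *\<^sub>R X2 + z *\<^sub>R Jo)"
      using pres TW by blast
    then have "l \<in> L_spectrum (\<phi> (x *\<^sub>R X1 + y *\<^sub>R X2 + z *\<^sub>R Jo)) \<longleftrightarrow> l \<in> L_spectrum (x *\<^sub>R X1 + y *\<^sub>R X2 + z *\<^sub>R Jo)"
      by simp
    then show ?thesis unfolding L_spectrum_def mem_Collect_eq Leig_par phiT unfolding oT unfolding o_lin .
  qed
  have C: "oa M = 0 \<and> od M = 0 \<and> ob K + ob L = 0 \<and> oc K + oc L = 0 \<and> ob M > 0 \<and> oc M > 0 \<and> ob M * oc M = 1 \<and>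
    ((oa K = 1 \<and> od K = 0 \<and> oa L = 0 \<and> od L = 1) \<or> (oa K = 0 \<and> od K = 1 \<and> oa L = 1 \<and> od L = 0))"
    by (rule core[OF H])
  define M2 where "M2 = ob M"
  define M3 where "M3 = oc M"
  have M2p: "M2 > 0" and M3p: "M3 > 0" and e: "M2 * M3 = 1" using C by (simp_all add: M2_def M3_def)
  have kl1: "oa K + oa L = 1" and kl4: "od K + od L = 1" using C by auto
  have E11: "Eij 1 1 = (1/2) *\<^sub>R X1 + (1/2) *\<^sub>R X2 + (-1/2) *\<^sub>R Jo"
    unfolding TT Eij_mat2 by (simp add: mat2_eq)
  have E22: "Eij 2 2 = (1/2) *\<^sub>R X1 + (1/2) *\<^sub>R X2 + (1/2) *\<^sub>R Jo"
    unfolding TT Eij_mat2 by (simp add: mat2_eq)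
  have E12: "Eij 1 2 + Eij 2 1 = 1 *\<^sub>R X1 + (-1) *\<^sub>R X2 + 0 *\<^sub>R Jo"
    unfolding TT Eij_mat2 by (simp add: mat2_eq)
  define P where "P = \<phi> (Eij 1 1)"
  define Q where "Q = \<phi> (Eij 2 2)"
  define R where "R = \<phi> (Eij 1 2 + Eij 2 1)"
  have P: "P = (1/2) *\<^sub>R K + (1/2) *\<^sub>R L + (-1/2) *\<^sub>R M" unfolding P_def E11 phiT ..
  have Q: "Q = (1/2) *\<^sub>R K + (1/2) *\<^sub>R L + (1/2) *\<^sub>R M" unfolding Q_def E22 phiT ..
  have R: "R = 1 *\<^sub>R K + (-1) *\<^sub>R L + 0 *\<^sub>R M" unfolding R_def E12 phiT ..
  have oP: "oa P = 1/2" "ob P = - M2/2" "oc P = - M3/2" "od P = 1/2"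
    unfolding P o_lin using C kl1 kl4 by (simp_all add: M2_def M3_def field_simps)
  have oQ: "oa Q = 1/2" "ob Q = M2/2" "oc Q = M3/2" "od Q = 1/2"
    unfolding Q o_lin using C kl1 kl4 by (simp_all add: M2_def M3_def field_simps)
  have Pm: "P = mat2 (1/2 + (M2+M3)/4) ((M3-M2)/4) ((M2-M3)/4) (1/2 - (M2+M3)/4)"
    apply (rule trans[OF recon[of P]]) unfolding oP by (simp add: mat2_eq field_simps)
  have Qm: "Q = mat2 (1/2 - (M2+M3)/4) ((M2-M3)/4) ((M3-M2)/4) (1/2 + (M2+M3)/4)"
    apply (rule trans[OF recon[of Q]]) unfolding oQ by (simp add: mat2_eq field_simps)
  define a where "a = 1/2 - (M2+M3)/4"
  define s where "s = (if M2 \<ge> M3 then 1 else -1::real)"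
  have aid: "a\<^sup>2 - a = ((M2-M3)/4)\<^sup>2 + (M2*M3 - 1)/4"
    unfolding a_def by (simp add: power2_eq_square field_simps)
  have sq: "sqrt (a\<^sup>2 - a) = \<bar>M2-M3\<bar>/4" unfolding aid e by simp
  have ss: "s * sqrt (a\<^sup>2 - a) = (M2-M3)/4" unfolding sq s_def by auto
  have sum2: "(M2+M3)\<^sup>2 = (M2-M3)\<^sup>2 + 2\<^sup>2" using e by (simp add: power2_eq_square algebra_simps)
  have "2 \<le> M2 + M3"
    by (rule power2_le_imp_le) (use sum2 M2p M3p in auto)
  then have a0: "a \<le> 0" unfolding a_def by simp
  have s1: "s \<in> {-1, 1}" unfolding s_def by auto
  have part1: "P = mat2 (1 - a) (- s * sqrt (a\<^sup>2 - a)) (s * sqrt (a\<^sup>2 - a)) a \<and>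
            Q = mat2 a (s * sqrt (a\<^sup>2 - a)) (- s * sqrt (a\<^sup>2 - a)) (1 - a)"
    unfolding Pm Qm mat2_eq mat2_nth using ss by (simp add: a_def field_simps)
  obtain t where t: "t \<in> {-1, 1::real}" "oa R = t" "od R = -t"
  proof (cases "oa K = 1 \<and> od K = 0 \<and> oa L = 0 \<and> od L = 1")
    case True
    then show ?thesis using that[of 1] unfolding R o_lin by simp
  next
    case False
    then have "oa K = 0 \<and> od K = 1 \<and> oa L = 1 \<and> od L = 0" using C by blast
    then show ?thesis using that[of "-1"] unfolding R o_lin by simp
  qed
  define m where "m = R$1$1"
  define r where "r = R$1$2"
  have Rm: "R = mat2 m r (-r + 2*t) (-m)"
    unfolding m_def r_def mat2_eq mat2_nth using t(2,3)
    by (simp add: oa_def od_def field_simps)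
  have part2: "\<exists>m r. \<exists>t\<in>{-1, 1::real}. R = mat2 m r (- r + 2 * t) (- m)"
    using Rm t(1) by blast
  have part3: "P = Eij 1 1 \<and> Q = Eij 2 2 \<and> (\<exists>m. \<exists>r\<in>{-1, 1::real}. R = mat2 m r r (- m))"
    if S: "W = sym2"
  proof -
    have "M \<in> sym2" using maps JoW S unfolding M_def by blast
    then have "transpose M = M" by (simp add: sym2_def)
    then have "(transpose M)$1$2 = M$1$2" by simp
    then have "M$1$2 = M$2$1" by (simp add: transpose_def)
    then have "M2 = M3" unfolding M2_def M3_def ob_def oc_def by simp
    then have "M2 * M2 = 1" using e by simp
    then have "(M2 - 1) * (M2 + 1) = 0" by (simp add: algebra_simps)
    then have "M2 = 1" using M2p by auto
    then have M31: "M3 = 1" using \<open>M2 = M3\<close> by simp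
    have "P = Eij 1 1" "Q = Eij 2 2" unfolding Pm Qm Eij_mat2 using \<open>M2 = 1\<close> M31 by (simp_all add: mat2_eq)
    moreover have "R \<in> sym2" using maps S unfolding R_def E12 using TW by blast
    then have "transpose R = R" by (simp add: sym2_def)
    then have "(transpose R)$1$2 = R$1$2" by simp
    then have "R$1$2 = R$2$1" by (simp add: transpose_def)
    then have "r = t" using Rm unfolding mat2_eq r_def by simp
    then have "R = mat2 m t t (-m)" using Rm by simp
    ultimately show ?thesis using t(1) by blast
  qed
  show ?thesis using part1 part2 part3 a0 s1 unfolding P_def Q_def R_def by blast
qed

end
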